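(* Let $\sigma_\rho>0$ and let $W$ follow the unit-log-normal distribution, i.e. $W$ has PDF $$f_W(w;\sigma_\rho)=\frac{1}{w(1-w)\sigma_\rho}\,\phi(A(w)),\qquad 0<w<1,$$ where $\phi$ is the standard normal PDF and $A(w)=\frac{1}{\sigma_\rho}\log\frac{w}{1-w}$. If $\sigma_\rho\le\sqrt2$, then $f_W(\cdot;\sigma_\rho)$ is unimodal with mode $w_0=1/2$. If $\sigma_\rho>\sqrt2$, then the equation $\frac{\sigma_\rho^2}{2}y={\rm arctanh}(y)$ has exactly two nonzero solutions $y_-<0<y_+=-y_-$, and $f_W(\cdot;\sigma_\rho)$ is bimodal with modes $$w_-=\frac{1}{1+\exp(-\sigma_\rho^2y_-)},\qquad w_+=\frac{1}{1+\exp(-\sigma_\rho^2y_+)},$$ and minimum point $w_0=1/2$, with $0<w_-<w_0<w_+<1$. Moreover, the graph of $f_W(\cdot;\sigma_\rho)$ is symmetric around $w_0=1/2$.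
   Context: This is the unit-log-symmetric distribution ${\rm ULS}(\sigma_\rho,g_c)$ with density generator $g_c(x)=\exp(-x/2)$, where $\sigma_\rho=\sigma\sqrt{2(1-\rho)}$; for this generator the ULS PDF reduces to the displayed formula. *)

theory Defs
  imports "HOL-Probability.Probability"
begin

definition ULN_A :: "real \<Rightarrow> real \<Rightarrow> real" where
  "ULN_A s w = (1 / s) * ln (w / (1 - w))"

definition ULN_pdf :: "real \<Rightarrow> real \<Rightarrow> real" where
  "ULN_pdf s w = (if 0 < w \<and> w < 1
      then 1 / (w * (1 - w) * s) * std_normal_density (ULN_A s w) else 0)"

definition unimodal_with_mode :: "(real \<Rightarrow> real) \<Rightarrow> real \<Rightarrow> bool" where
  "unimodal_with_mode f m \<longleftrightarrow> 0 < m \<and> m < 1 \<and>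
     strict_mono_on {0<..m} f \<and> strict_antimono_on {m..<1} f"

definition bimodal_with :: "(real \<Rightarrow> real) \<Rightarrow> real \<Rightarrow> real \<Rightarrow> real \<Rightarrow> bool" where
  "bimodal_with f a b c \<longleftrightarrow> 0 < a \<and> a < b \<and> b < c \<and> c < 1 \<and>
     strict_mono_on {0<..a} f \<and> strict_antimono_on {a..b} f \<and>
     strict_mono_on {b..c} f \<and> strict_antimono_on {c..<1} f"

end

theory Submission
  imports Defs
begin

definition EE :: "real \<Rightarrow> real \<Rightarrow> real" where
  "EE s y = s^2/2*y - artanh y"
definition GG :: "real \<Rightarrow> real \<Rightarrow> real" where
  "GG s w = - ln w - ln (1-w) - (1/(2* s^2)) * ((ln w - ln (1-w)) * (ln w - ln (1-w)))"
definition DD :: "real \<Rightarrow> real \<Rightarrow> real" where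
  "DD s w = 2*w-1 - (ln w - ln (1-w))/s^2"

lemma pdf_exp:
  assumes "s > 0" "0 < w" "w < 1"
  shows "ULN_pdf s w = (1/(s* sqrt(2*pi))) * exp (GG s w)"
proof -
  have A: "ULN_A s w = (ln w - ln (1-w))/s"
    using assms by (simp add: ULN_A_def ln_div)
  have e: "exp (GG s w) = exp (- ln w) * exp (- ln (1-w)) * exp (- ((ln w - ln (1-w))^2) / (2 * s^2))"
  proof -
    have "GG s w = - ln w + - ln (1-w) + - ((ln w - ln (1-w))^2) / (2 * s^2)"
      by (simp add: GG_def power2_eq_square)
    then show ?thesis by (simp only: exp_add)
  qed
  have e1: "exp (- ln w) = 1/w" using assms by (simp add: exp_minus inverse_eq_divide)
  have e2: "exp (- ln (1-w)) = 1/(1-w)" using assms by (simp add: exp_minus inverse_eq_divide)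
  have q: "- ((ULN_A s w)^2) / 2 = - ((ln w - ln (1-w))^2) / (2* s^2)"
    unfolding A using assms by (simp add: power_divide)
  show ?thesis using assms
    unfolding ULN_pdf_def std_normal_density_def e e1 e2 q by simp
qed

lemma GG_deriv:
  assumes "s > 0" "0 < w" "w < 1"
  shows "(GG s has_real_derivative DD s w/(w*(1-w))) (at w)"
proof -
  have dln: "(ln has_real_derivative 1/w) (at w)" by (rule DERIV_ln_divide[OF assms(2)])
  have dln1: "((\<lambda>x. ln (1-x)) has_real_derivative -1/(1-w)) (at w)"
    using assms by (auto intro!: derivative_eq_intros simp: field_simps)
  have dL: "((\<lambda>x. ln x - ln (1-x)) has_real_derivative 1/w - (-1/(1-w))) (at w)"
    by (rule DERIV_diff[OF dln dln1])
  have "((\<lambda>x. - ln x - ln (1-x) - (1/(2* s^2)) * ((ln x - ln (1-x)) * (ln x - ln (1-x))))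
     has_real_derivative (- (1/w) - (-1/(1-w)) - (1/(2* s^2)) * ((1/w - (-1/(1-w))) * (ln w - ln (1-w)) + (1/w - (-1/(1-w))) * (ln w - ln (1-w))))) (at w)"
    by (rule DERIV_diff[OF DERIV_diff[OF DERIV_minus[OF dln] dln1] DERIV_cmult[OF DERIV_mult[OF dL dL]]])
  then have "(GG s has_real_derivative
     (- (1/w) - (-1/(1-w)) - (1/(2* s^2)) * (2*(ln w - ln (1-w)) * (1/w - (-1/(1-w)))))) (at w)"
    unfolding GG_def[abs_def] by (simp add: algebra_simps)
  moreover have "(- (1/w) - (-1/(1-w)) - (1/(2* s^2)) * (2*(ln w - ln (1-w)) * (1/w - (-1/(1-w)))))
     = DD s w/(w*(1-w))"
  proof -
    define L where "L = ln w - ln (1-w)"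
    have "1/w - (-1/(1-w)) = 1/(w*(1-w))" using assms by (simp add: field_simps)
    moreover have "- (1/w) - (-1/(1-w)) = (2*w-1)/(w*(1-w))" using assms by (simp add: field_simps)
    ultimately have "(- (1/w) - (-1/(1-w)) - (1/(2* s^2)) * (2*L * (1/w - (-1/(1-w)))))
       = (2*w-1)/(w*(1-w)) - (L/s^2)/(w*(1-w))" by simp
    also have "\<dots> = (2*w-1 - L/s^2)/(w*(1-w))" by (simp add: diff_divide_distrib)
    finally show ?thesis unfolding DD_def L_def .
  qed
  ultimately show ?thesis by simp
qed

lemma DD_EE:
  assumes "s > 0" "0 < w" "w < 1"
  shows "DD s w = 2/s^2 * EE s (2*w-1)"
proof -
  have "artanh (2*w-1) = ln (w/(1-w))/2"
    unfolding artanh_def using assms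
    by (simp add: field_simps)
  then have "ln w - ln (1-w) = 2*artanh (2*w-1)" using assms by (simp add: ln_div)
  then show ?thesis unfolding DD_def EE_def using assms by (simp add: field_simps)
qed

lemma GG_cont:
  assumes "s > 0" "0 < x" "y < 1"
  shows "continuous_on {x..y} (GG s)"
  using assms unfolding GG_def by (intro continuous_intros) auto

lemma pdf_inc:
  assumes "s > 0" "0 < x" "x < y" "y < 1" "\<And>t. x < t \<Longrightarrow> t < y \<Longrightarrow> EE s (2*t-1) > 0"
  shows "ULN_pdf s x < ULN_pdf s y"
proof -
  have "GG s x < GG s y"
  proof (rule DERIV_pos_imp_increasing_open[OF assms(3)])
    fix t assume t: "x < t" "t < y"
    have "DD s t > 0" using DD_EE[OF assms(1), of t] assms(1,2,4) t assms(5)[OF t]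
      by (simp add: zero_less_mult_iff)
    then have "DD s t/(t*(1-t)) > 0" using t assms by simp
    then show "\<exists>d. DERIV (GG s) t :> d \<and> d > 0" using GG_deriv[OF assms(1), of t] t assms by auto
  qed (rule GG_cont[OF assms(1,2,4)])
  then show ?thesis using pdf_exp[OF assms(1)] assms by (simp add: divide_strict_right_mono)
qed

lemma pdf_dec:
  assumes "s > 0" "0 < x" "x < y" "y < 1" "\<And>t. x < t \<Longrightarrow> t < y \<Longrightarrow> EE s (2*t-1) < 0"
  shows "ULN_pdf s y < ULN_pdf s x"
proof -
  have "GG s y < GG s x"
  proof (rule DERIV_neg_imp_decreasing_open[OF assms(3)])
    fix t assume t: "x < t" "t < y"
    have "DD s t < 0" using DD_EE[OF assms(1), of t] assms(1,2,4) t assms(5)[OF t]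
      by (simp add: divide_neg_pos)
    then have "DD s t/(t*(1-t)) < 0" using t assms by (simp add: divide_neg_pos)
    then show "\<exists>d. DERIV (GG s) t :> d \<and> d < 0" using GG_deriv[OF assms(1), of t] t assms by auto
  qed (rule GG_cont[OF assms(1,2,4)])
  then show ?thesis using pdf_exp[OF assms(1)] assms by (simp add: divide_strict_right_mono)
qed


lemma EE_odd: "-1 < y \<Longrightarrow> y < 1 \<Longrightarrow> EE s (-y) = - EE s y"
  unfolding EE_def by (subst artanh_minus_real) auto

lemma EE_deriv: "-1 < y \<Longrightarrow> y < 1 \<Longrightarrow> (EE s has_real_derivative s^2/2 - 1/(1-y^2)) (at y)"
  unfolding EE_def[abs_def]
  by (auto intro!: derivative_eq_intros)

lemma EE_cont: "-1 < a \<Longrightarrow> b < 1 \<Longrightarrow> continuous_on {a..b} (EE s)"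
  unfolding EE_def[abs_def] by (intro continuous_intros) auto

lemma EE_inc:
  assumes "-1 < a" "a < b" "b < 1" "\<And>t. a < t \<Longrightarrow> t < b \<Longrightarrow> 1/(1-t^2) < s^2/2"
  shows "EE s a < EE s b"
proof (rule DERIV_pos_imp_increasing_open[OF assms(2)])
  fix t assume t: "a < t" "t < b"
  show "\<exists>d. DERIV (EE s) t :> d \<and> d > 0"
    using EE_deriv[of t s] t assms(1,3) assms(4)[OF t] by auto
qed (rule EE_cont[OF assms(1,3)])

lemma EE_dec:
  assumes "-1 < a" "a < b" "b < 1" "\<And>t. a < t \<Longrightarrow> t < b \<Longrightarrow> 1/(1-t^2) > s^2/2"
  shows "EE s b < EE s a"
proof (rule DERIV_neg_imp_decreasing_open[OF assms(2)])
  fix t assume t: "a < t" "t < b"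
  show "\<exists>d. DERIV (EE s) t :> d \<and> d < 0"
    using EE_deriv[of t s] t assms(1,3) assms(4)[OF t] by auto
qed (rule EE_cont[OF assms(1,3)])

lemma small_sign:
  assumes "s^2 \<le> 2" "0 < y" "y < 1"
  shows "EE s y < 0"
proof -
  have "EE s y < EE s 0"
  proof (rule EE_dec)
    fix t :: real assume t: "0 < t" "t < y"
    have "t^2 < 1" using t assms by (simp add: abs_square_less_1)
    moreover have "t^2 > 0" using t by simp
    ultimately have "1/(1-t^2) > 1" by simp
    then show "1/(1-t^2) > s^2/2" using assms by simp
  qed (use assms in auto)
  then show ?thesis by (simp add: EE_def)
qed

lemma large_sign:
  assumes "s^2 > 2"
  shows "\<exists>yp. 0 < yp \<and> yp < 1 \<and> EE s yp = 0 \<and> (\<forall>y. 0 < y \<and> y < yp \<longrightarrow> EE s y > 0)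
     \<and> (\<forall>y. yp < y \<and> y < 1 \<longrightarrow> EE s y < 0)"
proof -
  define y0 where "y0 = sqrt (1 - 2/s^2)"
  have "s \<noteq> 0" using assms by (auto simp: power2_eq_square)
  then have sp: "0 < s^2" by simp
  have s2: "2/s^2 < 1" "0 < 2/s^2" using assms sp by (auto simp: divide_less_eq)
  have y0: "0 < y0" "y0 < 1" unfolding y0_def using s2 by (auto simp: real_sqrt_lt_1_iff)
  have y0sq: "y0^2 = 1 - 2/s^2" unfolding y0_def using s2 by simp
  have inc: "EE s a < EE s b" if "0 \<le> a" "a < b" "b \<le> y0" for a b
  proof (rule EE_inc)
    fix t assume t: "a < t" "t < b"
    have "t^2 < y0^2" using t that by (intro power_strict_mono) auto
    then have "1 - t^2 > 2/s^2" using y0sq by simp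
    then have "inverse (1-t^2) < inverse (2/s^2)" using s2 by (intro less_imp_inverse_less) auto
    then show "1/(1-t^2) < s^2/2" by (simp add: inverse_eq_divide)
  qed (use that y0 in auto)
  have dec: "EE s b < EE s a" if "y0 \<le> a" "a < b" "b < 1" for a b
  proof (rule EE_dec)
    fix t assume t: "a < t" "t < b"
    have "t^2 > y0^2" using t that y0 by (intro power_strict_mono) auto
    then have "1 - t^2 < 2/s^2" using y0sq by simp
    moreover have "t^2 < 1" using t that y0 by (simp add: abs_square_less_1)
    ultimately have "inverse (1-t^2) > inverse (2/s^2)" using s2 by (intro less_imp_inverse_less) auto
    then show "1/(1-t^2) > s^2/2" by (simp add: inverse_eq_divide)
  qed (use that y0 in auto)
  have possmall: "EE s y > 0" if "0 < y" "y \<le> y0" for y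
    using inc[of 0 y] that by (simp add: EE_def)
  define y1 where "y1 = tanh (s^2)"
  have y1: "0 < y1" "y1 < 1" unfolding y1_def using assms by (auto simp: tanh_real_lt_1)
  have "EE s y1 = s^2/2*y1 - s^2" unfolding EE_def y1_def by (simp add: artanh_tanh_real)
  also have "\<dots> < 0" using y1 sp mult_strict_right_mono[of y1 2 "s^2"] by (simp add: field_simps)
  finally have e1: "EE s y1 < 0" .
  have y01: "y0 < y1" using possmall[of y1] e1 y1 by force
  obtain yp where yp: "y0 \<le> yp" "yp \<le> y1" "EE s yp = 0"
    using IVT2'[of "EE s" y1 0 y0] e1 possmall[of y0] y0 y01 EE_cont[of y0 y1 s] y1 by auto
  have ypy0: "y0 < yp" using yp possmall[of y0] y0 by (cases "yp = y0") auto
  show ?thesis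
  proof (intro exI conjI allI impI)
    show "0 < yp" "yp < 1" "EE s yp = 0" using yp ypy0 y0 y1 by auto
  next
    fix y assume y: "0 < y \<and> y < yp"
    show "EE s y > 0"
    proof (cases "y \<le> y0")
      case True then show ?thesis using possmall y by auto
    next
      case False then show ?thesis using dec[of y yp] y yp y1 by auto
    qed
  next
    fix y assume y: "yp < y \<and> y < 1"
    then show "EE s y < 0" using dec[of yp y] yp ypy0 by auto
  qed
qed

lemma smono:
  assumes "s > 0" "\<forall>x\<in>S. a \<le> x \<and> x \<le> b \<and> 0 < x \<and> x < 1"
    "\<And>t. a < t \<Longrightarrow> t < b \<Longrightarrow> EE s (2*t-1) > 0"
  shows "monotone_on S (<) (<) (ULN_pdf s)"
  unfolding monotone_on_def
proof (intro ballI impI)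
  fix x y assume xy: "x \<in> S" "y \<in> S" "x < y"
  show "ULN_pdf s x < ULN_pdf s y"
    by (rule pdf_inc) (use assms xy in \<open>force+\<close>)
qed

lemma santi:
  assumes "s > 0" "\<forall>x\<in>S. a \<le> x \<and> x \<le> b \<and> 0 < x \<and> x < 1"
    "\<And>t. a < t \<Longrightarrow> t < b \<Longrightarrow> EE s (2*t-1) < 0"
  shows "monotone_on S (<) (\<lambda>x y. y < x) (ULN_pdf s)"
  unfolding monotone_on_def
proof (intro ballI impI)
  fix x y assume xy: "x \<in> S" "y \<in> S" "x < y"
  show "ULN_pdf s y < ULN_pdf s x"
    by (rule pdf_dec) (use assms xy in \<open>force+\<close>)
qed

lemma symm:
  assumes "s > 0" "0 < w" "w < 1"
  shows "ULN_pdf s (1 - w) = ULN_pdf s w"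
proof -
  have "GG s (1-w) = GG s w" unfolding GG_def by (simp add: algebra_simps)
  then show ?thesis using pdf_exp[OF assms(1)] assms by simp
qed


theorem theorem1:
  fixes s :: real
  assumes "s > 0"
  shows "(s \<le> sqrt 2 \<longrightarrow> unimodal_with_mode (ULN_pdf s) (1/2))
    \<and> (s > sqrt 2 \<longrightarrow>
        (\<exists>ym yp. ym < 0 \<and> 0 < yp \<and> yp = - ym \<and>
           {y. y \<noteq> 0 \<and> -1 < y \<and> y < 1 \<and> s\<^sup>2 / 2 * y = artanh y} = {ym, yp} \<and>
           (let wm = 1 / (1 + exp (- s\<^sup>2 * ym)); wp = 1 / (1 + exp (- s\<^sup>2 * yp)) in
              0 < wm \<and> wm < 1/2 \<and> 1/2 < wp \<and> wp < 1 \<and>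
              bimodal_with (ULN_pdf s) wm (1/2) wp)))
    \<and> (\<forall>w. 0 < w \<and> w < 1 \<longrightarrow> ULN_pdf s (1 - w) = ULN_pdf s w)"
proof (intro conjI impI allI)
  fix w :: real assume "0 < w \<and> w < 1"
  then show "ULN_pdf s (1 - w) = ULN_pdf s w" using symm assms by auto
next
  assume "s \<le> sqrt 2"
  then have s2: "s^2 \<le> 2" using assms
    by (metis less_eq_real_def real_sqrt_le_iff real_sqrt_pow2 real_sqrt_ge_zero power_mono zero_le_numeral)
  have neg: "EE s y < 0" if "0 < y" "y < 1" for y using small_sign[OF s2] that by auto
  have pos: "EE s y > 0" if "-1 < y" "y < 0" for y
    using neg[of "-y"] EE_odd[of y s] that by auto
  show "unimodal_with_mode (ULN_pdf s) (1/2)"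
    unfolding unimodal_with_mode_def
  proof (intro conjI)
    show "strict_mono_on {0<..1/2} (ULN_pdf s)"
      by (rule smono[where a=0 and b="1/2"]) (use assms pos in auto)
    show "strict_antimono_on {1/2..<1} (ULN_pdf s)"
      by (rule santi[where a="1/2" and b=1]) (use assms neg in auto)
  qed auto
next
  assume "s > sqrt 2"
  then have s2: "s^2 > 2" using assms
    by (metis real_sqrt_less_iff real_sqrt_pow2 real_sqrt_ge_zero power_strict_mono zero_less_numeral pos2 less_eq_real_def)
  obtain yp where yp: "0 < yp" "yp < 1" "EE s yp = 0"
    and P: "\<And>y. 0 < y \<Longrightarrow> y < yp \<Longrightarrow> EE s y > 0"
    and N: "\<And>y. yp < y \<Longrightarrow> y < 1 \<Longrightarrow> EE s y < 0"
    using large_sign[OF s2] by blast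
  have P': "EE s y < 0" if "-yp < y" "y < 0" for y
    using P[of "-y"] EE_odd[of y s] that yp by auto
  have N': "EE s y > 0" if "-1 < y" "y < -yp" for y
    using N[of "-y"] EE_odd[of y s] that yp by auto
  have eqE: "s\<^sup>2 / 2 * y = artanh y \<longleftrightarrow> EE s y = 0" for y by (auto simp: EE_def)
  have setEq: "{y. y \<noteq> 0 \<and> -1 < y \<and> y < 1 \<and> s\<^sup>2 / 2 * y = artanh y} = {-yp, yp}"
  proof (intro set_eqI iffI)
    fix y assume "y \<in> {y. y \<noteq> 0 \<and> -1 < y \<and> y < 1 \<and> s\<^sup>2 / 2 * y = artanh y}"
    then have y: "y \<noteq> 0" "-1 < y" "y < 1" "EE s y = 0" using eqE by auto
    show "y \<in> {-yp, yp}"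
    proof (rule ccontr)
      assume "y \<notin> {-yp, yp}"
      then have "y < -yp \<or> (-yp < y \<and> y < 0) \<or> (0 < y \<and> y < yp) \<or> yp < y" using y by auto
      then show False using P N P' N' y by force
    qed
  next
    fix y assume "y \<in> {-yp, yp}"
    then show "y \<in> {y. y \<noteq> 0 \<and> -1 < y \<and> y < 1 \<and> s\<^sup>2 / 2 * y = artanh y}"
      using yp EE_odd[of yp s] eqE by auto
  qed
  have ln2: "s^2 * yp = ln ((1+yp)/(1-yp))"
    using yp(3) unfolding EE_def artanh_def by simp
  have ex1: "exp (- s\<^sup>2 * yp) = (1-yp)/(1+yp)"
    using yp by (simp add: ln2 exp_minus inverse_eq_divide)
  have ex2: "exp (- s\<^sup>2 * (-yp)) = (1+yp)/(1-yp)"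
    using yp by (simp add: ln2)
  have wp: "1 / (1 + exp (- s\<^sup>2 * yp)) = (1+yp)/2"
    unfolding ex1 using yp by (simp add: field_simps)
  have wm: "1 / (1 + exp (- s\<^sup>2 * (-yp))) = (1-yp)/2"
    unfolding ex2 using yp by (simp add: field_simps)
  show "\<exists>ym yp. ym < 0 \<and> 0 < yp \<and> yp = - ym \<and>
           {y. y \<noteq> 0 \<and> -1 < y \<and> y < 1 \<and> s\<^sup>2 / 2 * y = artanh y} = {ym, yp} \<and>
           (let wm = 1 / (1 + exp (- s\<^sup>2 * ym)); wp = 1 / (1 + exp (- s\<^sup>2 * yp)) in
              0 < wm \<and> wm < 1/2 \<and> 1/2 < wp \<and> wp < 1 \<and>
              bimodal_with (ULN_pdf s) wm (1/2) wp)"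
  proof (intro exI conjI)
    show "-yp < 0" "0 < yp" "yp = - (-yp)" using yp by auto
    show "{y. y \<noteq> 0 \<and> -1 < y \<and> y < 1 \<and> s\<^sup>2 / 2 * y = artanh y} = {-yp, yp}" by (rule setEq)
    have bm: "bimodal_with (ULN_pdf s) ((1-yp)/2) (1/2) ((1+yp)/2)"
      unfolding bimodal_with_def
    proof (intro conjI)
      show "strict_mono_on {0<..(1-yp)/2} (ULN_pdf s)"
        by (rule smono[where a=0 and b="(1-yp)/2"]) (use assms N' yp in auto)
      show "strict_antimono_on {(1-yp)/2..1/2} (ULN_pdf s)"
        by (rule santi[where a="(1-yp)/2" and b="1/2"]) (use assms P' yp in auto)
      show "strict_mono_on {1/2..(1+yp)/2} (ULN_pdf s)"
        by (rule smono[where a="1/2" and b="(1+yp)/2"]) (use assms P yp in auto)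
      show "strict_antimono_on {(1+yp)/2..<1} (ULN_pdf s)"
        by (rule santi[where a="(1+yp)/2" and b=1]) (use assms N yp in auto)
    qed (use yp in auto)
    then show "let wm = 1 / (1 + exp (- s\<^sup>2 * (-yp))); wp = 1 / (1 + exp (- s\<^sup>2 * yp)) in
              0 < wm \<and> wm < 1/2 \<and> 1/2 < wp \<and> wp < 1 \<and>
              bimodal_with (ULN_pdf s) wm (1/2) wp"
      unfolding wm wp Let_def using yp by auto
  qed
qed

end
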